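(* Let $L_2>0$, let $T^a,T^b\in\mathbb{R}^3$ and $\bar T\in\mathbb{R}$ be constants, and define $$P_2(x,L_2)=\begin{cases}0 & x>1/L_2\\ L_2(1-L_2x)^3 & 0<x\le 1/L_2\\ L_2\sqrt{15(L_2x-1/5)^2+2/5} & x\le 0.\end{cases}$$ Let $h(R^a,R^b)=\bar T^2-\|R^aT^a-R^bT^b\|^2$ for $R^a,R^b\in\mathbb{R}^{3\times3}$ and $\bar h(R^a,R^b)=P_2(h(R^a,R^b),L_2)$. Then: $\bar h$ is twice differentiable on $\mathbb{R}^{3\times3}\times\mathbb{R}^{3\times3}$ with locally Lipschitz second derivatives; there is a polynomial $q$ such that $\bar h$ is $q(L_2)$-curvature bounded; and $x\mapsto P_2(x,L_2)$ is a monotone function of $\max(1/L_2-x,0)$ with $\min_xP_2(x,L_2)=0$ and $P_2(0,L_2)=L_2$.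
   Context: A function $\phi$ is $L$-curvature bounded if $\phi(x)+\frac L2\|x\|^2$ is convex and $\nabla\phi$ is $L$-Lipschitz (matrices are identified with vectors). *)

theory Defs
  imports "HOL-Analysis.Analysis" "HOL-Computational_Algebra.Polynomial"
begin

text \<open>Matrices in R^{3x3} are real^3^3; its norm is the Frobenius norm (matrices identified
 with vectors). Pairs (R^a, R^b) live in the product space with the Euclidean product norm.\<close>

definition P2 :: "real \<Rightarrow> real \<Rightarrow> real" where
  "P2 x L2 = (if x > 1 / L2 then 0
              else if 0 < x then L2 * (1 - L2 * x) ^ 3
              else L2 * sqrt (15 * (L2 * x - 1/5)^2 + 2/5))"

definition hfun :: "real^3 \<Rightarrow> real^3 \<Rightarrow> real \<Rightarrow> (real^3^3) \<times> (real^3^3) \<Rightarrow> real" where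
  "hfun Ta Tb Tbar R = Tbar^2 - (norm (fst R *v Ta - snd R *v Tb))^2"

definition hbar :: "real^3 \<Rightarrow> real^3 \<Rightarrow> real \<Rightarrow> real \<Rightarrow> (real^3^3) \<times> (real^3^3) \<Rightarrow> real" where
  "hbar Ta Tb Tbar L2 R = P2 (hfun Ta Tb Tbar R) L2"

definition curvature_bounded :: "real \<Rightarrow> ('a::real_inner \<Rightarrow> real) \<Rightarrow> bool" where
  "curvature_bounded L \<phi> \<longleftrightarrow>
     convex_on UNIV (\<lambda>x. \<phi> x + L / 2 * (norm x)^2) \<and>
     (\<exists>g. (\<forall>x. (\<phi> has_derivative (\<lambda>v. g x \<bullet> v)) (at x)) \<and>
          (\<forall>x y. dist (g x) (g y) \<le> L * dist x y))"

definition twice_diff_loc_lip_hess :: "('a::real_inner \<Rightarrow> real) \<Rightarrow> bool" where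
  "twice_diff_loc_lip_hess \<phi> \<longleftrightarrow>
     (\<exists>g H. (\<forall>x. (\<phi> has_derivative (\<lambda>v. g x \<bullet> v)) (at x)) \<and>
            (\<forall>x. (g has_derivative blinfun_apply (H x)) (at x)) \<and>
            (\<forall>x. \<exists>e>0. \<exists>K. \<forall>y\<in>ball x e. \<forall>z\<in>ball x e. dist (H y) (H z) \<le> K * dist y z))"

end

theory Submission
  imports Defs
begin


lemma deriv_glue:
  fixes f fa fb :: "real \<Rightarrow> real"
  assumes d: "0 < d" and fa: "(fa has_real_derivative D) (at a)" and fb: "(fb has_real_derivative D) (at a)"
    and e1: "\<And>y. y \<le> a \<Longrightarrow> dist y a < d \<Longrightarrow> f y = fa y"
    and e2: "\<And>y. a \<le> y \<Longrightarrow> dist y a < d \<Longrightarrow> f y = fb y"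
  shows "(f has_real_derivative D) (at a)"
proof -
  have l: "(f has_real_derivative D) (at a within {..a})"
    by (rule has_field_derivative_transform_within[OF has_field_derivative_at_within[OF fa] d])
       (auto simp: e1)
  have r: "(f has_real_derivative D) (at a within {a..})"
    by (rule has_field_derivative_transform_within[OF has_field_derivative_at_within[OF fb] d])
       (auto simp: e2)
  have "((\<lambda>y. (f y - f a) / (y - a)) \<longlongrightarrow> D) (at a within {..a} \<union> {a..})"
    using l r unfolding has_field_derivative_iff by (simp add: Lim_within_Un)
  moreover have "{..a} \<union> {a..} = (UNIV::real set)" by auto
  ultimately show ?thesis unfolding has_field_derivative_iff by simp
qed



definition uu :: "real \<Rightarrow> real \<Rightarrow> real" where "uu L x = 15*(L*x - 1/5)^2 + 2/5"

definition P2d :: "real \<Rightarrow> real \<Rightarrow> real" where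
  "P2d L x = (if x > 1/L then 0 else if 0 < x then -3*L^2*(1-L*x)^2
              else 15*L^2*(L*x-1/5)/sqrt(uu L x))"

definition P2dd :: "real \<Rightarrow> real \<Rightarrow> real" where
  "P2dd L x = (if x > 1/L then 0 else if 0 < x then 6*L^3*(1-L*x)
              else 6*L^3/(uu L x * sqrt(uu L x)))"

lemma uu_pos: "uu L x \<ge> 2/5"
  unfolding uu_def by simp

lemma uu_ge1: "L > 0 \<Longrightarrow> x \<le> 0 \<Longrightarrow> uu L x \<ge> 1"
proof -
  assume "L > 0" "x \<le> 0"
  then have a: "L*x \<le> 0" by (simp add: mult_nonneg_nonpos)
  have "(L*x-1/5)^2 = (L*x)^2 - 2/5*(L*x) + 1/25" by (simp add: power2_eq_square algebra_simps)
  moreover have "(L*x)^2 \<ge> 0" by simp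
  ultimately show ?thesis using a unfolding uu_def by linarith
qed

lemma uu_0 [simp]: "uu L 0 = 1" unfolding uu_def by (simp add: power2_eq_square)

lemma deriv_uu: "((uu L) has_real_derivative (30*L*(L*x - 1/5))) (at x)"
  unfolding uu_def[abs_def]
  apply (rule derivative_eq_intros refl)+
  apply (simp add: algebra_simps)
  done

lemma deriv_left1: "((\<lambda>x. L * sqrt (uu L x)) has_real_derivative 15*L^2*(L*x-1/5)/sqrt(uu L x)) (at x)"
proof -
  have p: "uu L x > 0" using uu_pos[of L x] by linarith
  have sp: "sqrt (uu L x) > 0" using p by simp
  have "((\<lambda>x. L * sqrt (uu L x)) has_real_derivative L * (inverse (sqrt (uu L x))/2 * (30*L*(L*x - 1/5)))) (at x)"
    by (rule DERIV_cmult, rule DERIV_chain2[OF DERIV_real_sqrt[OF p] deriv_uu])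
  moreover have "L * (inverse (sqrt (uu L x))/2 * (30*L*(L*x - 1/5))) = 15*L^2*(L*x-1/5)/sqrt(uu L x)"
    using sp by (simp add: field_simps power2_eq_square)
  ultimately show ?thesis by simp
qed

lemma inv_pos_aux: "(L::real) > 0 \<Longrightarrow> x \<le> 0 \<Longrightarrow> \<not> 1/L < x"
proof -
  assume "L > 0" "x \<le> 0"
  moreover have "1/L > 0" using \<open>L > 0\<close> by simp
  ultimately show ?thesis by linarith
qed

lemma P2_left: "L > 0 \<Longrightarrow> x \<le> 0 \<Longrightarrow> P2 x L = L * sqrt (uu L x)"
  using inv_pos_aux[of L x] unfolding P2_def uu_def by simp
lemma P2_mid: "0 < x \<Longrightarrow> x \<le> 1/L \<Longrightarrow> P2 x L = L * (1 - L*x)^3"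
  unfolding P2_def by simp
lemma P2_right: "x > 1/L \<Longrightarrow> P2 x L = 0"
  unfolding P2_def by simp
lemma P2d_left: "L > 0 \<Longrightarrow> x \<le> 0 \<Longrightarrow> P2d L x = 15*L^2*(L*x-1/5)/sqrt(uu L x)"
  using inv_pos_aux[of L x] unfolding P2d_def by simp
lemma P2d_mid: "0 < x \<Longrightarrow> x \<le> 1/L \<Longrightarrow> P2d L x = -3*L^2*(1-L*x)^2"
  unfolding P2d_def by simp
lemma P2d_right: "x > 1/L \<Longrightarrow> P2d L x = 0"
  unfolding P2d_def by simp
lemma P2dd_left: "L > 0 \<Longrightarrow> x \<le> 0 \<Longrightarrow> P2dd L x = 6*L^3/(uu L x * sqrt(uu L x))"
  using inv_pos_aux[of L x] unfolding P2dd_def by simp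
lemma P2dd_mid: "0 < x \<Longrightarrow> x \<le> 1/L \<Longrightarrow> P2dd L x = 6*L^3*(1-L*x)"
  unfolding P2dd_def by simp
lemma P2dd_right: "x > 1/L \<Longrightarrow> P2dd L x = 0"
  unfolding P2dd_def by simp

lemma dmid1: "((\<lambda>x. L*(1-L*x)^3) has_real_derivative -3*L^2*(1-L*x)^2) (at x)"
  apply (rule derivative_eq_intros refl)+
  apply (simp add: algebra_simps power2_eq_square)
  done

lemma dmid2: "((\<lambda>x. -3*L^2*(1-L*x)^2) has_real_derivative 6*L^3*(1-L*x)) (at x)"
  apply (rule derivative_eq_intros refl)+
  apply (simp add: algebra_simps power2_eq_square power3_eq_cube)
  done

lemma dleft2: "((\<lambda>x. 15*L^2*(L*x-1/5)/sqrt(uu L x)) has_real_derivative 6*L^3/(uu L x * sqrt(uu L x))) (at x)"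
proof -
  have p: "uu L x > 0" using uu_pos[of L x] by linarith
  have sp: "sqrt (uu L x) > 0" using p by simp
  have s2: "sqrt (uu L x) * sqrt (uu L x) = uu L x" using p by simp
  have d1: "((\<lambda>x. 15*L^2*(L*x-1/5)) has_real_derivative 15*L^2*L) (at x)"
    by (auto intro!: derivative_eq_intros)
  have d2: "((\<lambda>x. sqrt (uu L x)) has_real_derivative (inverse (sqrt (uu L x))/2 * (30*L*(L*x - 1/5)))) (at x)"
    by (rule DERIV_chain2[OF DERIV_real_sqrt[OF p] deriv_uu])
  have "((\<lambda>x. 15*L^2*(L*x-1/5)/sqrt(uu L x)) has_real_derivative
     (15*L^2*L * sqrt (uu L x) - 15*L^2*(L*x-1/5) * (inverse (sqrt (uu L x))/2 * (30*L*(L*x - 1/5)))) / (sqrt (uu L x) * sqrt (uu L x))) (at x)"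
    by (rule DERIV_divide[OF d1 d2]) (use sp in simp)
  moreover have "(15*L^2*L * sqrt (uu L x) - 15*L^2*(L*x-1/5) * (inverse (sqrt (uu L x))/2 * (30*L*(L*x - 1/5)))) / (sqrt (uu L x) * sqrt (uu L x))
      = 6*L^3/(uu L x * sqrt(uu L x))"
  proof -
    have "(15*L^2*L * sqrt (uu L x) - 15*L^2*(L*x-1/5) * (inverse (sqrt (uu L x))/2 * (30*L*(L*x - 1/5))))
        = 15*L^3 * (uu L x - 15*(L*x-1/5)^2) / sqrt (uu L x)"
      using sp s2 by (simp add: field_simps power2_eq_square power3_eq_cube)
    also have "\<dots> = 6*L^3 / sqrt (uu L x)" by (simp add: uu_def)
    finally show ?thesis using s2 sp by (simp add: field_simps)
  qed
  ultimately show ?thesis by simp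
qed

lemma P2_deriv:
  assumes L: "L > 0"
  shows "((\<lambda>y. P2 y L) has_real_derivative P2d L x) (at x)"
proof -
  have lp: "1/L > 0" using L by simp
  consider "x < 0" | "x = 0" | "0 < x \<and> x < 1/L" | "x = 1/L" | "x > 1/L" by linarith
  then show ?thesis
  proof cases
    case 1
    show ?thesis
    proof (rule deriv_glue[where d="-x" and fa="\<lambda>x. L * sqrt (uu L x)" and fb="\<lambda>x. L * sqrt (uu L x)"])
      fix y assume "dist y x < -x"
      then have "y < 0" by (simp add: dist_real_def)
      then show "P2 y L = L * sqrt (uu L y)" using L by (simp add: P2_left)
    next
      fix y assume "dist y x < -x"
      then have "y < 0" by (simp add: dist_real_def)
      then show "P2 y L = L * sqrt (uu L y)" using L by (simp add: P2_left)
    qed (use 1 deriv_left1[of L x] L in \<open>simp_all add: P2d_left\<close>)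
  next
    case 2
    show ?thesis
    proof (rule deriv_glue[where d="1/L" and fa="\<lambda>x. L * sqrt (uu L x)" and fb="\<lambda>x. L*(1-L*x)^3"])
      fix y assume "y \<le> x"
      then show "P2 y L = L * sqrt (uu L y)" using L 2 by (simp add: P2_left)
    next
      fix y assume "x \<le> y" "dist y x < 1/L"
      then have "0 \<le> y" "y \<le> 1/L" using 2 by (auto simp: dist_real_def)
      then show "P2 y L = L*(1-L*y)^3" using L
        by (cases "y = 0") (auto simp: P2_left P2_mid)
    next
      show "((\<lambda>x. L * sqrt (uu L x)) has_real_derivative P2d L x) (at x)"
        using deriv_left1[of L x] L 2 by (simp add: P2d_left)
    next
      show "((\<lambda>x. L*(1-L*x)^3) has_real_derivative P2d L x) (at x)"
        using dmid1[of L x] L 2 by (simp add: P2d_left)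
    qed (use lp in simp)
  next
    case 3
    show ?thesis
    proof (rule deriv_glue[where d="min x (1/L - x)" and fa="\<lambda>x. L*(1-L*x)^3" and fb="\<lambda>x. L*(1-L*x)^3"])
      fix y assume "dist y x < min x (1/L - x)"
      then have "0 < y" "y \<le> 1/L" by (auto simp: dist_real_def)
      then show "P2 y L = L*(1-L*y)^3" by (simp add: P2_mid)
    next
      fix y assume "dist y x < min x (1/L - x)"
      then have "0 < y" "y \<le> 1/L" by (auto simp: dist_real_def)
      then show "P2 y L = L*(1-L*y)^3" by (simp add: P2_mid)
    qed (use 3 dmid1[of L x] in \<open>simp_all add: P2d_mid\<close>)
  next
    case 4
    show ?thesis
    proof (rule deriv_glue[where d="1/L" and fa="\<lambda>x. L*(1-L*x)^3" and fb="\<lambda>x. 0"])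
      fix y assume "y \<le> x" "dist y x < 1/L"
      then have "0 < y" "y \<le> 1/L" using 4 by (auto simp: dist_real_def)
      then show "P2 y L = L*(1-L*y)^3" by (simp add: P2_mid)
    next
      fix y assume "x \<le> y"
      then show "P2 y L = 0" using 4 L
        by (cases "y = 1/L") (auto simp: P2_right P2_mid)
    next
      show "((\<lambda>x. L*(1-L*x)^3) has_real_derivative P2d L x) (at x)"
        using dmid1[of L x] L 4 lp by (simp add: P2d_mid)
    next
      show "((\<lambda>x. 0) has_real_derivative P2d L x) (at x)"
        using L 4 lp by (simp add: P2d_mid)
    qed (use lp in simp)
  next
    case 5
    show ?thesis
    proof (rule deriv_glue[where d="x - 1/L" and fa="\<lambda>x. 0" and fb="\<lambda>x. 0"])
      fix y assume "dist y x < x - 1/L"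
      then have "y > 1/L" by (auto simp: dist_real_def)
      then show "P2 y L = 0" by (simp add: P2_right)
    next
      fix y assume "dist y x < x - 1/L"
      then have "y > 1/L" by (auto simp: dist_real_def)
      then show "P2 y L = 0" by (simp add: P2_right)
    qed (use 5 in \<open>simp_all add: P2d_right\<close>)
  qed
qed

lemma P2d_deriv:
  assumes L: "L > 0"
  shows "((P2d L) has_real_derivative P2dd L x) (at x)"
proof -
  have lp: "1/L > 0" using L by simp
  consider "x < 0" | "x = 0" | "0 < x \<and> x < 1/L" | "x = 1/L" | "x > 1/L" by linarith
  then show ?thesis
  proof cases
    case 1
    show ?thesis
    proof (rule deriv_glue[where d="-x" and fa="\<lambda>x. 15*L^2*(L*x-1/5)/sqrt(uu L x)" and fb="\<lambda>x. 15*L^2*(L*x-1/5)/sqrt(uu L x)"])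
      fix y assume "dist y x < -x"
      then have "y < 0" by (simp add: dist_real_def)
      then show "P2d L y = 15*L^2*(L*y-1/5)/sqrt(uu L y)" using L by (simp add: P2d_left P2dd_left P2d_mid P2dd_mid)
    next
      fix y assume "dist y x < -x"
      then have "y < 0" by (simp add: dist_real_def)
      then show "P2d L y = 15*L^2*(L*y-1/5)/sqrt(uu L y)" using L by (simp add: P2d_left P2dd_left P2d_mid P2dd_mid)
    qed (use 1 dleft2[of L x] L in \<open>simp_all add: P2dd_left\<close>)
  next
    case 2
    show ?thesis
    proof (rule deriv_glue[where d="1/L" and fa="\<lambda>x. 15*L^2*(L*x-1/5)/sqrt(uu L x)" and fb="\<lambda>x. -3*L^2*(1-L*x)^2"])
      fix y assume "y \<le> x"
      then show "P2d L y = 15*L^2*(L*y-1/5)/sqrt(uu L y)" using L 2 by (simp add: P2d_left P2dd_left P2d_mid P2dd_mid)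
    next
      fix y assume "x \<le> y" "dist y x < 1/L"
      then have "0 \<le> y" "y \<le> 1/L" using 2 by (auto simp: dist_real_def)
      then show "P2d L y = -3*L^2*(1-L*y)^2" using L
        by (cases "y = 0") (auto simp: P2d_left P2d_mid)
    next
      show "((\<lambda>x. 15*L^2*(L*x-1/5)/sqrt(uu L x)) has_real_derivative P2dd L x) (at x)"
        using dleft2[of L x] L 2 by (simp add: P2d_left P2dd_left P2d_mid P2dd_mid)
    next
      show "((\<lambda>x. -3*L^2*(1-L*x)^2) has_real_derivative P2dd L x) (at x)"
        using dmid2[of L x] L 2 by (simp add: P2d_left P2dd_left P2d_mid P2dd_mid)
    qed (use lp in simp)
  next
    case 3
    show ?thesis
    proof (rule deriv_glue[where d="min x (1/L - x)" and fa="\<lambda>x. -3*L^2*(1-L*x)^2" and fb="\<lambda>x. -3*L^2*(1-L*x)^2"])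
      fix y assume "dist y x < min x (1/L - x)"
      then have "0 < y" "y \<le> 1/L" by (auto simp: dist_real_def)
      then show "P2d L y = -3*L^2*(1-L*y)^2" by (simp add: P2d_left P2dd_left P2d_mid P2dd_mid)
    next
      fix y assume "dist y x < min x (1/L - x)"
      then have "0 < y" "y \<le> 1/L" by (auto simp: dist_real_def)
      then show "P2d L y = -3*L^2*(1-L*y)^2" by (simp add: P2d_left P2dd_left P2d_mid P2dd_mid)
    qed (use 3 dmid2[of L x] in \<open>simp_all add: P2dd_mid\<close>)
  next
    case 4
    show ?thesis
    proof (rule deriv_glue[where d="1/L" and fa="\<lambda>x. -3*L^2*(1-L*x)^2" and fb="\<lambda>x. 0"])
      fix y assume "y \<le> x" "dist y x < 1/L"
      then have "0 < y" "y \<le> 1/L" using 4 by (auto simp: dist_real_def)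
      then show "P2d L y = -3*L^2*(1-L*y)^2" by (simp add: P2d_left P2dd_left P2d_mid P2dd_mid)
    next
      fix y assume "x \<le> y"
      then show "P2d L y = 0" using 4 L
        by (cases "y = 1/L") (auto simp: P2d_right P2d_mid)
    next
      show "((\<lambda>x. -3*L^2*(1-L*x)^2) has_real_derivative P2dd L x) (at x)"
        using dmid2[of L x] L 4 lp by (simp add: P2d_left P2dd_left P2d_mid P2dd_mid)
    next
      show "((\<lambda>x. 0) has_real_derivative P2dd L x) (at x)"
        using L 4 lp by (simp add: P2d_left P2dd_left P2d_mid P2dd_mid)
    qed (use lp in simp)
  next
    case 5
    show ?thesis
    proof (rule deriv_glue[where d="x - 1/L" and fa="\<lambda>x. 0" and fb="\<lambda>x. 0"])
      fix y assume "dist y x < x - 1/L"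
      then have "y > 1/L" by (auto simp: dist_real_def)
      then show "P2d L y = 0" by (simp add: P2d_right)
    next
      fix y assume "dist y x < x - 1/L"
      then have "y > 1/L" by (auto simp: dist_real_def)
      then show "P2d L y = 0" by (simp add: P2d_right)
    qed (use 5 in \<open>simp_all add: P2dd_right\<close>)
  qed
qed



lemma C1_lip:
  fixes f :: "real \<Rightarrow> real"
  assumes d: "\<And>x. (f has_real_derivative f' x) (at x)" and c: "continuous_on UNIV f'"
  shows "\<exists>K. K-lipschitz_on {a..b} f"
proof -
  have "compact (f' ` {a..b})"
    by (rule compact_continuous_image[OF continuous_on_subset[OF c]]) auto
  then obtain B where B: "\<And>x. x \<in> {a..b} \<Longrightarrow> norm (f' x) \<le> B"
    using compact_imp_bounded bounded_iff by (metis imageI)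
  have "(max B 0)-lipschitz_on {a..b} f"
  proof (rule bounded_derivative_imp_lipschitz[where f'="\<lambda>x h. f' x * h"])
    fix x assume "x \<in> {a..b}"
    show "(f has_derivative (\<lambda>h. f' x * h)) (at x within {a..b})"
      using d[of x] unfolding has_field_derivative_def by (rule has_derivative_at_withinI)
    show "onorm (\<lambda>h. f' x * h) \<le> max B 0"
      by (rule onorm_le) (use B[OF \<open>x \<in> {a..b}\<close>] in \<open>auto simp: abs_mult intro!: mult_right_mono\<close>)
  qed auto
  then show ?thesis by blast
qed

lemma lip_glue:
  fixes f :: "real \<Rightarrow> real"
  assumes l: "K-lipschitz_on ({a..b} \<inter> {..p}) f" and r: "K-lipschitz_on ({a..b} \<inter> {p..}) f"
  shows "K-lipschitz_on {a..b} f"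
proof (rule lipschitz_onI)
  show "0 \<le> K" using l lipschitz_on_nonneg by blast
  have *: "dist (f x) (f y) \<le> K * dist x y" if xy: "x \<in> {a..b}" "y \<in> {a..b}" "x \<le> y" for x y
  proof -
    consider "y \<le> p" | "p \<le> x" | "x < p \<and> p < y" by linarith
    then show ?thesis
    proof cases
      case 1 then show ?thesis using xy by (intro lipschitz_onD[OF l]) auto
    next
      case 2 then show ?thesis using xy by (intro lipschitz_onD[OF r]) auto
    next
      case 3
      have "dist (f x) (f y) \<le> dist (f x) (f p) + dist (f p) (f y)" by (rule dist_triangle)
      also have "dist (f x) (f p) \<le> K * dist x p" using xy 3 by (intro lipschitz_onD[OF l]) auto
      also have "dist (f p) (f y) \<le> K * dist p y" using xy 3 by (intro lipschitz_onD[OF r]) auto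
      also have "K * dist x p + K * dist p y = K * dist x y"
        using 3 by (simp add: dist_real_def algebra_simps)
      finally show ?thesis by simp
    qed
  qed
  fix x y assume "x \<in> {a..b}" "y \<in> {a..b}"
  then show "dist (f x) (f y) \<le> K * dist x y"
    using *[of x y] *[of y x] by (cases "x \<le> y") (auto simp: dist_commute)
qed

definition loclip :: "('a::metric_space \<Rightarrow> 'b::metric_space) \<Rightarrow> bool" where
  "loclip f \<longleftrightarrow> (\<forall>x. \<exists>e>0. \<exists>K. \<forall>y\<in>ball x e. \<forall>z\<in>ball x e. dist (f y) (f z) \<le> K * dist y z)"

lemma loclip_from_intervals:
  fixes f :: "real \<Rightarrow> 'b::metric_space"
  assumes "\<And>a b. \<exists>K. K-lipschitz_on {a..b} f"
  shows "loclip f"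
  unfolding loclip_def
proof
  fix x
  obtain K where K: "K-lipschitz_on {x-1..x+1} f" using assms by blast
  have "ball x 1 \<subseteq> {x-1..x+1}" by (auto simp: dist_real_def)
  then show "\<exists>e>0. \<exists>K. \<forall>y\<in>ball x e. \<forall>z\<in>ball x e. dist (f y) (f z) \<le> K * dist y z"
    using K by (intro exI[of _ 1] exI[of _ K]) (auto intro!: lipschitz_onD[OF K])
qed

lemma P2dd_loclip:
  assumes L: "L > 0"
  shows "loclip (P2dd L)"
proof (rule loclip_from_intervals)
  fix a b :: real
  define f1 where "f1 y = 6*L^3 * inverse (uu L y * sqrt (uu L y))" for y
  define f1' where "f1' y = 6*L^3 * (- (inverse (uu L y * sqrt (uu L y)) *
      (30*L*(L*y - 1/5) * sqrt (uu L y) + (inverse (sqrt (uu L y)) / 2 * (30*L*(L*y - 1/5))) * uu L y)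
      * inverse (uu L y * sqrt (uu L y))))" for y
  have up: "uu L y > 0" for y using uu_pos[of L y] by linarith
  have "((\<lambda>y. uu L y * sqrt (uu L y)) has_real_derivative
      (30*L*(L*y - 1/5) * sqrt (uu L y) + (inverse (sqrt (uu L y)) / 2 * (30*L*(L*y - 1/5))) * uu L y)) (at y)" for y
    by (rule DERIV_mult[OF deriv_uu DERIV_chain2[OF DERIV_real_sqrt[OF up] deriv_uu]])
  then have "(f1 has_real_derivative f1' y) (at y)" for y
    unfolding f1_def[abs_def] f1'_def
    by (intro DERIV_cmult DERIV_inverse') (use up[of y] in auto)
  moreover have "continuous_on UNIV f1'"
    unfolding f1'_def uu_def using up unfolding uu_def
    by (intro continuous_intros) (auto simp: less_imp_neq[symmetric] )
  ultimately obtain K1 where K1: "K1-lipschitz_on {a..b} f1" using C1_lip by blast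
  have "((\<lambda>y. 6*L^3*(1-L*y)) has_real_derivative (-6*L^4)) (at y)" for y
    apply (rule derivative_eq_intros refl)+ by (simp add: algebra_simps power4_eq_xxxx power3_eq_cube)
  then have "\<exists>K. K-lipschitz_on {a..b} (\<lambda>y. 6*L^3*(1-L*y))"
    by (rule C1_lip) (rule continuous_on_const)
  then obtain K2 where K2: "K2-lipschitz_on {a..b} (\<lambda>y. 6*L^3*(1-L*y))" by blast
  define K where "K = max K1 K2"
  have K1': "K-lipschitz_on {a..b} f1" using K1 by (rule lipschitz_on_mono) (auto simp: K_def)
  have K2': "K-lipschitz_on {a..b} (\<lambda>y. 6*L^3*(1-L*y))" using K2 by (rule lipschitz_on_mono) (auto simp: K_def)
  have K0: "0 \<le> K" using K1 lipschitz_on_nonneg K_def by fastforce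
  have "K-lipschitz_on ({a..b} \<inter> {..0}) (P2dd L)"
    by (rule lipschitz_on_transform[OF lipschitz_on_subset[OF K1']])
       (auto simp: P2dd_left[OF L] f1_def divide_inverse)
  moreover have "K-lipschitz_on ({a..b} \<inter> {0..}) (P2dd L)"
  proof -
    have e: "{a..b} \<inter> {0..} = {max a 0..b}" by auto
    have "K-lipschitz_on {max a 0..b} (P2dd L)"
    proof (rule lip_glue[where p="1/L"])
      show "K-lipschitz_on ({max a 0..b} \<inter> {..1/L}) (P2dd L)"
      proof (rule lipschitz_on_transform[OF lipschitz_on_subset[OF K2']])
        fix y assume y: "y \<in> {max a 0..b} \<inter> {..1/L}"
        show "P2dd L y = 6*L^3*(1-L*y)"
        proof (cases "y = 0")
          case True then show ?thesis using L by (simp add: P2dd_left)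
        next
          case False then show ?thesis using y by (simp add: P2dd_mid)
        qed
      qed auto
      show "K-lipschitz_on ({max a 0..b} \<inter> {1/L..}) (P2dd L)"
      proof (rule lipschitz_on_transform[OF lipschitz_on_subset[OF lipschitz_on_mono[OF lipschitz_on_constant[of _ 0]]]])
        fix y assume y: "y \<in> {max a 0..b} \<inter> {1/L..}"
        show "P2dd L y = 0"
        proof (cases "y = 1/L")
          case True then show ?thesis using L by (simp add: P2dd_mid)
        next
          case False then show ?thesis using y by (simp add: P2dd_right)
        qed
      qed (use K0 in auto)
    qed
    then show ?thesis using e by simp
  qed
  ultimately show "\<exists>K. K-lipschitz_on {a..b} (P2dd L)" using lip_glue by blast
qed



lemma Lx_le1: "(L::real) > 0 \<Longrightarrow> x \<le> 1/L \<Longrightarrow> L*x \<le> 1"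
  by (simp add: field_simps mult.commute)

lemma P2d_bound: assumes L: "L > 0" shows "\<bar>P2d L x\<bar> \<le> 4*L^2"
proof -
  consider "x \<le> 0" | "0 < x \<and> x \<le> 1/L" | "x > 1/L" by linarith
  then show ?thesis
  proof cases
    case 1
    have p: "uu L x > 0" using uu_pos[of L x] by linarith
    have sp: "sqrt (uu L x) > 0" using p by simp
    have "(15*\<bar>L*x-1/5\<bar>/4)^2 \<le> uu L x"
      unfolding uu_def by (simp add: power_divide power_mult_distrib)
    then have a: "15*\<bar>L*x-1/5\<bar>/4 \<le> sqrt (uu L x)" by (rule real_le_rsqrt)
    have "\<bar>P2d L x\<bar> = L^2 * (15*\<bar>L*x-1/5\<bar>) / sqrt (uu L x)"
      using 1 L sp by (simp add: P2d_left abs_mult abs_divide)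
    also have "\<dots> \<le> 4*L^2" using a sp L by (simp add: divide_le_eq field_simps)
    finally show ?thesis .
  next
    case 2
    then have "0 \<le> 1 - L*x" "1 - L*x \<le> 1" using Lx_le1[OF L] L by auto
    then have "(1-L*x)^2 \<le> 1" by (simp add: power_le_one)
    then show ?thesis using 2 L by (simp add: P2d_mid abs_mult)
  next
    case 3 then show ?thesis by (simp add: P2d_right)
  qed
qed

lemma P2dd_bound: assumes L: "L > 0" shows "\<bar>P2dd L x\<bar> \<le> 6*L^3"
proof -
  consider "x \<le> 0" | "0 < x \<and> x \<le> 1/L" | "x > 1/L" by linarith
  then show ?thesis
  proof cases
    case 1
    have u1: "uu L x \<ge> 1" using uu_ge1[OF L 1] .
    then have "sqrt (uu L x) \<ge> 1" by simp
    then have q: "uu L x * sqrt (uu L x) \<ge> 1" using u1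
      by (metis mult_mono' mult_1 zero_le_one)
    have "\<bar>P2dd L x\<bar> = 6*L^3/(uu L x * sqrt(uu L x))"
      using 1 L q by (simp add: P2dd_left)
    also have "\<dots> \<le> 6*L^3/1" using q L by (intro divide_left_mono) auto
    finally show ?thesis by simp
  next
    case 2
    then have "0 \<le> 1 - L*x" "1 - L*x \<le> 1" using Lx_le1[OF L] L by auto
    then show ?thesis using 2 L by (simp add: P2dd_mid abs_mult)
  next
    case 3 then show ?thesis using L by (simp add: P2dd_right)
  qed
qed

lemma P2dd_xbound: assumes L: "L > 0" shows "\<bar>x\<bar> * \<bar>P2dd L x\<bar> \<le> 6*L^2"
proof -
  consider "x \<le> 0" | "0 < x \<and> x \<le> 1/L" | "x > 1/L" by linarith
  then show ?thesis
  proof cases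
    case 1
    have u1: "uu L x \<ge> 1" using uu_ge1[OF L 1] .
    then have s1: "sqrt (uu L x) \<ge> 1" by simp
    have t: "-(L*x) \<le> uu L x"
    proof -
      have "(L*x-1/5)^2 = (L*x)^2 - 2/5*(L*x) + 1/25" by (simp add: power2_eq_square algebra_simps)
      moreover have "(L*x)^2 \<ge> 0" by simp
      moreover have "L*x \<le> 0" using 1 L by (simp add: mult_nonneg_nonpos)
      ultimately show ?thesis unfolding uu_def by linarith
    qed
    also have "uu L x \<le> uu L x * sqrt (uu L x)" using s1 u1 by (simp add: mult_le_cancel_left1)
    finally have q: "-(L*x) \<le> uu L x * sqrt (uu L x)" .
    have qp: "uu L x * sqrt (uu L x) > 0" using u1 s1 by simp
    have "\<bar>x\<bar> * \<bar>P2dd L x\<bar> = 6*L^2 * (-(L*x) / (uu L x * sqrt (uu L x)))"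
      using 1 L qp u1 s1 by (simp add: P2dd_left abs_divide abs_mult power3_eq_cube power2_eq_square)
    also have "\<dots> \<le> 6*L^2 * 1"
    proof (intro mult_left_mono)
      have "-(L*x) / (uu L x * sqrt (uu L x)) \<le> (uu L x * sqrt (uu L x)) / (uu L x * sqrt (uu L x))"
        by (rule divide_right_mono[OF q]) (use qp u1 in simp)
      moreover have "(uu L x * sqrt (uu L x)) / (uu L x * sqrt (uu L x)) = 1" using qp u1 by simp
      ultimately show "-(L*x) / (uu L x * sqrt (uu L x)) \<le> 1" by linarith
    qed simp
    finally show ?thesis by simp
  next
    case 2
    then have a: "0 \<le> 1 - L*x" "1 - L*x \<le> 1" "0 \<le> L*x" "L*x \<le> 1" using Lx_le1[OF L] L by auto
    then have "(L*x) * (1 - L*x) \<le> 1 * 1" by (intro mult_mono) auto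
    then have "6*L^2 * ((L*x) * (1 - L*x)) \<le> 6*L^2 * 1" by (intro mult_left_mono) auto
    moreover have "\<bar>x\<bar> * \<bar>P2dd L x\<bar> = 6*L^2 * ((L*x) * (1 - L*x))"
      using 2 a L by (simp add: P2dd_mid abs_mult power3_eq_cube power2_eq_square)
    ultimately show ?thesis by simp
  next
    case 3 then show ?thesis using L by (simp add: P2dd_right)
  qed
qed

lemma P2_nonneg: assumes L: "L > 0" shows "0 \<le> P2 x L"
  unfolding P2_def using L Lx_le1[OF L, of x] by auto

lemma P2_at0: "L > 0 \<Longrightarrow> P2 0 L = L"
  by (simp add: P2_left)

lemma P2_antimono: assumes L: "L > 0" and xy: "x \<le> y" shows "P2 y L \<le> P2 x L"
proof -
  have cmp: "P2 y L \<le> L" if "0 < y" for y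
  proof (cases "y > 1/L")
    case True then show ?thesis using L by (simp add: P2_right)
  next
    case False
    then have "0 \<le> 1 - L*y" "1 - L*y \<le> 1" using Lx_le1[OF L, of y] L that by auto
    then have "(1-L*y)^3 \<le> 1" by (simp add: power_le_one)
    then show ?thesis using False that L by (simp add: P2_mid)
  qed
  have lge: "L \<le> P2 x L" if "x \<le> 0" for x
    using uu_ge1[OF L that] L that by (simp add: P2_left)
  consider "y \<le> 0" | "x \<le> 0 \<and> 0 < y" | "0 < x \<and> y \<le> 1/L" | "0 < x \<and> y > 1/L" using xy by linarith
  then show ?thesis
  proof cases
    case 1
    then have "x \<le> 0" using xy by simp
    have "uu L y \<le> uu L x"
    proof -
      have "L*x \<le> L*y" using xy L by simp
      moreover have "L*y \<le> 0" using 1 L by (simp add: mult_nonneg_nonpos)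
      ultimately have "\<bar>L*y - 1/5\<bar> \<le> \<bar>L*x-1/5\<bar>" by linarith
      then have "(L*y - 1/5)^2 \<le> (L*x-1/5)^2" by (simp only: abs_le_square_iff)
      then show ?thesis unfolding uu_def by simp
    qed
    then show ?thesis using 1 \<open>x \<le> 0\<close> L by (simp add: P2_left)
  next
    case 2 then show ?thesis using cmp lge by fastforce
  next
    case 3
    then have "0 \<le> 1 - L*y" "1 - L*y \<le> 1 - L*x" using Lx_le1[OF L, of y] L xy by auto
    then have "(1-L*y)^3 \<le> (1-L*x)^3" by (simp add: power_mono)
    then show ?thesis using 3 xy L by (simp add: P2_mid)
  next
    case 4 then show ?thesis using P2_nonneg[OF L] by (simp add: P2_right)
  qed
qed



lemma convex_from_lipgrad:
  fixes \<phi> :: "'a::real_inner \<Rightarrow> real"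
  assumes d: "\<And>x. (\<phi> has_derivative (\<lambda>v. g x \<bullet> v)) (at x)"
    and l: "\<And>x y. dist (g x) (g y) \<le> K * dist x y"
  shows "convex_on UNIV (\<lambda>x. \<phi> x + K / 2 * (norm x)^2)"
proof -
  define \<psi> where "\<psi> x = \<phi> x + K / 2 * (x \<bullet> x)" for x
  define G where "G x = g x + K *\<^sub>R x" for x
  have eqf: "(\<lambda>x. \<phi> x + K / 2 * (norm x)^2) = \<psi>"
    by (auto simp: \<psi>_def power2_norm_eq_inner)
  have dpsi: "(\<psi> has_derivative (\<lambda>v. G x \<bullet> v)) (at x)" for x
  proof -
    have "(\<psi> has_derivative (\<lambda>v. g x \<bullet> v + K / 2 * (x \<bullet> v + v \<bullet> x))) (at x)"
      unfolding \<psi>_def[abs_def]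
      by (intro derivative_intros d)
    moreover have "(\<lambda>v. g x \<bullet> v + K / 2 * (x \<bullet> v + v \<bullet> x)) = (\<lambda>v. G x \<bullet> v)"
      by (auto simp: G_def inner_add_left inner_commute algebra_simps)
    ultimately show ?thesis by simp
  qed
  have mono: "0 \<le> (G a - G b) \<bullet> (a - b)" for a b
  proof -
    have "(G a - G b) \<bullet> (a - b) = (g a - g b) \<bullet> (a - b) + K * (norm (a - b))^2"
      by (simp add: G_def inner_diff_left inner_diff_right inner_add_left power2_norm_eq_inner
          algebra_simps inner_commute)
    moreover have "-((g a - g b) \<bullet> (a - b)) \<le> norm (g a - g b) * norm (a - b)"
      using Cauchy_Schwarz_ineq2[of "g a - g b" "a - b"] by linarith
    moreover have "norm (g a - g b) * norm (a - b) \<le> K * norm (a - b) * norm (a - b)"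
      using l[of a b] by (intro mult_right_mono) (auto simp: dist_norm)
    ultimately show ?thesis by (simp add: power2_eq_square)
  qed
  have "convex_on UNIV \<psi>"
  proof (rule convex_onI)
    fix t :: real and x y :: 'a
    assume t: "0 < t" "t < 1"
    define p where "p s = \<psi> (x + s *\<^sub>R (y - x))" for s
    define p' where "p' s = G (x + s *\<^sub>R (y - x)) \<bullet> (y - x)" for s
    have dp: "(p has_real_derivative p' s) (at s)" for s
    proof -
      have "((\<lambda>s. x + s *\<^sub>R (y - x)) has_derivative (\<lambda>h. h *\<^sub>R (y - x))) (at s)"
        by (auto intro!: derivative_eq_intros)
      from has_derivative_compose[OF this dpsi]
      have "(p has_derivative (\<lambda>h. G (x + s *\<^sub>R (y - x)) \<bullet> (h *\<^sub>R (y - x)))) (at s)"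
        unfolding p_def[abs_def] .
      moreover have "(\<lambda>h. G (x + s *\<^sub>R (y - x)) \<bullet> (h *\<^sub>R (y - x))) = (*) (p' s)"
        by (auto simp: p'_def mult.commute)
      ultimately show ?thesis unfolding has_field_derivative_def by simp
    qed
    have "convex_on UNIV p"
    proof (rule convex_on_realI[where f'=p'])
      fix a b :: real assume ab: "a \<le> b"
      have "0 \<le> (G (x + b *\<^sub>R (y - x)) - G (x + a *\<^sub>R (y - x))) \<bullet> ((x + b *\<^sub>R (y - x)) - (x + a *\<^sub>R (y - x)))"
        by (rule mono)
      also have "\<dots> = (b - a) * (p' b - p' a)"
        by (simp add: p'_def inner_diff_left inner_diff_right scaleR_diff_left[symmetric] algebra_simps)
      finally have "0 \<le> (b - a) * (p' b - p' a)" .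
      then show "p' a \<le> p' b" using ab
        by (cases "a = b") (auto simp: zero_le_mult_iff)
    qed (use dp in auto)
    then have "p ((1 - t) *\<^sub>R 0 + t *\<^sub>R 1) \<le> (1 - t) * p 0 + t * p 1"
      using t by (intro convex_onD) auto
    moreover have "x + t *\<^sub>R (y - x) = (1 - t) *\<^sub>R x + t *\<^sub>R y"
      by (simp add: algebra_simps)
    ultimately show "\<psi> ((1 - t) *\<^sub>R x + t *\<^sub>R y) \<le> (1 - t) * \<psi> x + t * \<psi> y"
      by (simp add: p_def)
  qed simp
  then show ?thesis using eqf by simp
qed



lemma loclipD:
  assumes "loclip f"
  shows "\<exists>e>0. \<exists>K\<ge>0. \<forall>y\<in>ball x e. \<forall>z\<in>ball x e. dist (f y) (f z) \<le> K * dist y z"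
proof -
  obtain e K where e: "e > 0" and K: "\<forall>y\<in>ball x e. \<forall>z\<in>ball x e. dist (f y) (f z) \<le> K * dist y z"
    using assms unfolding loclip_def by blast
  have "\<forall>y\<in>ball x e. \<forall>z\<in>ball x e. dist (f y) (f z) \<le> max K 0 * dist y z"
  proof (intro ballI)
    fix y z assume "y \<in> ball x e" "z \<in> ball x e"
    then have "dist (f y) (f z) \<le> K * dist y z" using K by blast
    also have "\<dots> \<le> max K 0 * dist y z" by (intro mult_right_mono) auto
    finally show "dist (f y) (f z) \<le> max K 0 * dist y z" .
  qed
  then show ?thesis using e by (intro exI[of _ e] conjI exI[of _ "max K 0"]) auto
qed

lemma loclip_const: "loclip (\<lambda>x. c)"
proof -
  have "\<forall>y\<in>ball x 1. \<forall>z\<in>ball x 1. dist c c \<le> 0 * dist y z" for x by simp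
  then show ?thesis unfolding loclip_def using zero_less_one by blast
qed

lemma loclip_linear:
  assumes "bounded_linear f" shows "loclip f"
proof -
  obtain K where K: "K > 0" "\<And>x. norm (f x) \<le> norm x * K"
    using bounded_linear.pos_bounded[OF assms] by blast
  have "dist (f y) (f z) \<le> K * dist y z" for y z
  proof -
    have "dist (f y) (f z) = norm (f (y - z))"
      by (simp add: dist_norm linear_diff bounded_linear.linear[OF assms])
    also have "\<dots> \<le> K * dist y z" using K(2)[of "y - z"] by (simp add: dist_norm mult.commute)
    finally show "dist (f y) (f z) \<le> K * dist y z" .
  qed
  then show ?thesis unfolding loclip_def using zero_less_one by blast
qed

lemma loclip_compose:
  assumes f: "loclip f" and g: "loclip g"
  shows "loclip (\<lambda>x. f (g x))"
  unfolding loclip_def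
proof
  fix x
  obtain e1 K1 where e1: "e1 > 0" "K1 \<ge> 0" and K1: "\<forall>y\<in>ball x e1. \<forall>z\<in>ball x e1. dist (g y) (g z) \<le> K1 * dist y z"
    using loclipD[OF g, of x] by blast
  obtain e2 K2 where e2: "e2 > 0" "K2 \<ge> 0" and K2: "\<forall>y\<in>ball (g x) e2. \<forall>z\<in>ball (g x) e2. dist (f y) (f z) \<le> K2 * dist y z"
    using loclipD[OF f, of "g x"] by blast
  define e where "e = min e1 (e2 / (K1 + 1))"
  have e: "e > 0" "e \<le> e1" using e1 e2 by (auto simp: e_def)
  have "e \<le> e2 / (K1 + 1)" by (simp add: e_def)
  then have e': "e * (K1 + 1) \<le> e2" using e1 by (simp add: le_divide_eq)
  have inb: "g y \<in> ball (g x) e2" if "y \<in> ball x e" for y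
  proof -
    have "dist (g x) (g y) \<le> K1 * dist x y" using K1 that e e1 by auto
    also have "\<dots> \<le> K1 * e" using that e1 by (intro mult_left_mono) auto
    also have "\<dots> < e * (K1 + 1)" using e by (simp add: algebra_simps)
    finally show ?thesis using e' by simp
  qed
  have "\<forall>y\<in>ball x e. \<forall>z\<in>ball x e. dist (f (g y)) (f (g z)) \<le> (K2 * K1) * dist y z"
  proof (intro ballI)
    fix y z assume y: "y \<in> ball x e" and z: "z \<in> ball x e"
    have "dist (f (g y)) (f (g z)) \<le> K2 * dist (g y) (g z)" using K2 inb[OF y] inb[OF z] by blast
    also have "\<dots> \<le> K2 * (K1 * dist y z)" using K1 y z e e2 by (intro mult_left_mono) auto
    finally show "dist (f (g y)) (f (g z)) \<le> (K2 * K1) * dist y z" by (simp add: mult.assoc)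
  qed
  then show "\<exists>e>0. \<exists>K. \<forall>y\<in>ball x e. \<forall>z\<in>ball x e. dist (f (g y)) (f (g z)) \<le> K * dist y z"
    using e by blast
qed

lemma loclip_add:
  fixes f g :: "'a::metric_space \<Rightarrow> 'b::real_normed_vector"
  assumes f: "loclip f" and g: "loclip g"
  shows "loclip (\<lambda>x. f x + g x)"
  unfolding loclip_def
proof
  fix x
  obtain e1 K1 where e1: "e1 > 0" "K1 \<ge> 0" and K1: "\<forall>y\<in>ball x e1. \<forall>z\<in>ball x e1. dist (f y) (f z) \<le> K1 * dist y z"
    using loclipD[OF f, of x] by blast
  obtain e2 K2 where e2: "e2 > 0" "K2 \<ge> 0" and K2: "\<forall>y\<in>ball x e2. \<forall>z\<in>ball x e2. dist (g y) (g z) \<le> K2 * dist y z"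
    using loclipD[OF g, of x] by blast
  have "\<forall>y\<in>ball x (min e1 e2). \<forall>z\<in>ball x (min e1 e2). dist (f y + g y) (f z + g z) \<le> (K1 + K2) * dist y z"
  proof (intro ballI)
    fix y z assume y: "y \<in> ball x (min e1 e2)" and z: "z \<in> ball x (min e1 e2)"
    have "dist (f y + g y) (f z + g z) \<le> dist (f y) (f z) + dist (g y) (g z)"
      by (rule dist_triangle_add)
    also have "\<dots> \<le> K1 * dist y z + K2 * dist y z" using K1 K2 y z by (intro add_mono) auto
    finally show "dist (f y + g y) (f z + g z) \<le> (K1 + K2) * dist y z" by (simp add: algebra_simps)
  qed
  moreover have "min e1 e2 > 0" using e1 e2 by simp
  ultimately show "\<exists>e>0. \<exists>K. \<forall>y\<in>ball x e. \<forall>z\<in>ball x e. dist (f y + g y) (f z + g z) \<le> K * dist y z"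
    by blast
qed

lemma loclip_bilinear:
  fixes f :: "'a::metric_space \<Rightarrow> 'b::real_normed_vector" and g :: "'a \<Rightarrow> 'c::real_normed_vector"
  assumes P: "bounded_bilinear bp" and f: "loclip f" and g: "loclip g"
  shows "loclip (\<lambda>x. bp (f x) (g x))"
  unfolding loclip_def
proof
  fix x
  obtain KB where KB: "KB > 0" "\<And>a b. norm (bp a b) \<le> norm a * norm b * KB"
    using bounded_bilinear.pos_bounded[OF P] by blast
  obtain e1 K1 where e1: "e1 > 0" "K1 \<ge> 0" and K1: "\<forall>y\<in>ball x e1. \<forall>z\<in>ball x e1. dist (f y) (f z) \<le> K1 * dist y z"
    using loclipD[OF f, of x] by blast
  obtain e2 K2 where e2: "e2 > 0" "K2 \<ge> 0" and K2: "\<forall>y\<in>ball x e2. \<forall>z\<in>ball x e2. dist (g y) (g z) \<le> K2 * dist y z"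
    using loclipD[OF g, of x] by blast
  define e where "e = min e1 e2"
  define Bf where "Bf = norm (f x) + K1 * e"
  define Bg where "Bg = norm (g x) + K2 * e"
  have bf: "norm (f y) \<le> Bf" if "y \<in> ball x e" for y
  proof -
    have "y \<in> ball x e1" "x \<in> ball x e1" using that e1 by (auto simp: e_def)
    then have "dist (f y) (f x) \<le> K1 * dist y x" using K1 by blast
    also have "\<dots> \<le> K1 * e" using that e1 by (intro mult_left_mono) (auto simp: dist_commute)
    finally have "dist (f y) (f x) \<le> K1 * e" .
    then show ?thesis unfolding Bf_def using norm_triangle_ineq2[of "f y" "f x"] by (simp add: dist_norm)
  qed
  have bg: "norm (g y) \<le> Bg" if "y \<in> ball x e" for y
  proof -
    have "y \<in> ball x e2" "x \<in> ball x e2" using that e2 by (auto simp: e_def)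
    then have "dist (g y) (g x) \<le> K2 * dist y x" using K2 by blast
    also have "\<dots> \<le> K2 * e" using that e2 by (intro mult_left_mono) (auto simp: dist_commute)
    finally have "dist (g y) (g x) \<le> K2 * e" .
    then show ?thesis unfolding Bg_def using norm_triangle_ineq2[of "g y" "g x"] by (simp add: dist_norm)
  qed
  have Bf0: "Bf \<ge> 0" unfolding Bf_def using e1 e2 by (simp add: e_def)
  have Bg0: "Bg \<ge> 0" unfolding Bg_def using e1 e2 by (simp add: e_def)
  have "\<forall>y\<in>ball x e. \<forall>z\<in>ball x e. dist (bp (f y) (g y)) (bp (f z) (g z)) \<le> ((K1 * Bg + Bf * K2) * KB) * dist y z"
  proof (intro ballI)
    fix y z assume y: "y \<in> ball x e" and z: "z \<in> ball x e"
    have "bp (f y) (g y) - bp (f z) (g z) = bp (f y - f z) (g y) + bp (f z) (g y - g z)"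
      by (simp add: bounded_bilinear.diff_left[OF P] bounded_bilinear.diff_right[OF P])
    then have "dist (bp (f y) (g y)) (bp (f z) (g z)) \<le> norm (bp (f y - f z) (g y)) + norm (bp (f z) (g y - g z))"
      by (simp add: dist_norm norm_triangle_ineq)
    also have "\<dots> \<le> norm (f y - f z) * norm (g y) * KB + norm (f z) * norm (g y - g z) * KB"
      by (intro add_mono KB(2))
    also have "\<dots> \<le> (K1 * dist y z) * Bg * KB + Bf * (K2 * dist y z) * KB"
    proof (intro add_mono mult_right_mono mult_mono)
      show "norm (f y - f z) \<le> K1 * dist y z" using K1 y z by (auto simp: e_def dist_norm[symmetric])
      show "norm (g y - g z) \<le> K2 * dist y z" using K2 y z by (auto simp: e_def dist_norm[symmetric])
    qed (use bf bg y z KB Bf0 Bg0 e1 e2 in auto)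
    also have "\<dots> = (K1 * Bg + Bf * K2) * KB * dist y z" by (simp add: algebra_simps)
    finally show "dist (bp (f y) (g y)) (bp (f z) (g z)) \<le> ((K1 * Bg + Bf * K2) * KB) * dist y z" .
  qed
  moreover have "e > 0" using e1 e2 by (simp add: e_def)
  ultimately show "\<exists>e>0. \<exists>K. \<forall>y\<in>ball x e. \<forall>z\<in>ball x e. dist (bp (f y) (g y)) (bp (f z) (g z)) \<le> K * dist y z"
    by blast
qed



lemma lip_imp_loclip: "K-lipschitz_on UNIV f \<Longrightarrow> loclip f"
  unfolding loclip_def using lipschitz_onD zero_less_one by blast

lemma P2d_lip: assumes L: "L > 0" shows "(6*L^3)-lipschitz_on UNIV (P2d L)"
proof (rule bounded_derivative_imp_lipschitz[where f'="\<lambda>x h. P2dd L x * h"])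
  fix x :: real
  show "(P2d L has_derivative (*) (P2dd L x)) (at x within UNIV)"
    using P2d_deriv[OF L, of x] unfolding has_field_derivative_def by simp
  show "onorm ((*) (P2dd L x)) \<le> 6 * L ^ 3"
    by (rule onorm_le) (use P2dd_bound[OF L, of x] in \<open>auto simp: abs_mult intro!: mult_right_mono\<close>)
qed (use L in auto)

lemma main_generic:
  fixes A :: "'a::euclidean_space \<Rightarrow> 'b::euclidean_space" and c :: real
  assumes lin: "linear A"
  shows "(\<forall>L>0. twice_diff_loc_lip_hess (\<lambda>R. P2 (c - (norm (A R))^2) L))
       \<and> (\<exists>q :: real poly. \<forall>L>0. curvature_bounded (poly q L) (\<lambda>R. P2 (c - (norm (A R))^2) L))"
proof -
  define B where "B = adjoint A"
  define M where "M R = B (A R)" for R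
  define h where "h R = c - (norm (A R))^2" for R
  have adj: "x \<bullet> B y = A x \<bullet> y" for x y unfolding B_def by (rule adjoint_works[OF lin])
  have linB: "linear B" unfolding B_def by (rule adjoint_linear[OF lin])
  have blA: "bounded_linear A" using lin linear_conv_bounded_linear by blast
  have blB: "bounded_linear B" using linB linear_conv_bounded_linear by blast
  have blM: "bounded_linear M" unfolding M_def[abs_def]
    using bounded_linear_compose[OF blB blA] by (simp add: o_def)
  obtain cA where cA: "cA > 0" "\<And>x. norm (A x) \<le> norm x * cA"
    using bounded_linear.pos_bounded[OF blA] by blast
  obtain cB where cB: "cB > 0" "\<And>x. norm (B x) \<le> norm x * cB"
    using bounded_linear.pos_bounded[OF blB] by blast
  have dA: "(A has_derivative A) (at R)" for R
    using bounded_linear.has_derivative[OF blA has_derivative_ident] by simp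
  have dM: "(M has_derivative M) (at R)" for R
    using bounded_linear.has_derivative[OF blM has_derivative_ident] by simp
  have dh: "(h has_derivative (\<lambda>v. (-2 *\<^sub>R M R) \<bullet> v)) (at R)" for R
  proof -
    have e: "h = (\<lambda>R. c - A R \<bullet> A R)" unfolding h_def by (simp add: power2_norm_eq_inner)
    have "((\<lambda>R. c - A R \<bullet> A R) has_derivative (\<lambda>v. 0 - (A R \<bullet> A v + A v \<bullet> A R))) (at R)"
      by (intro derivative_intros dA)
    moreover have "(\<lambda>v. 0 - (A R \<bullet> A v + A v \<bullet> A R)) = (\<lambda>v. (-2 *\<^sub>R M R) \<bullet> v)"
    proof
      fix v
      have "A v \<bullet> A R = v \<bullet> M R" unfolding M_def by (simp add: adj)
      then show "0 - (A R \<bullet> A v + A v \<bullet> A R) = (-2 *\<^sub>R M R) \<bullet> v"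
        by (simp add: inner_commute)
    qed
    ultimately show ?thesis using e by simp
  qed
  have hle: "norm (M R)^2 \<le> cB^2 * (\<bar>c\<bar> + \<bar>h R\<bar>)" for R
  proof -
    have "norm (M R) \<le> norm (A R) * cB" unfolding M_def by (rule cB(2))
    then have "norm (M R)^2 \<le> (norm (A R) * cB)^2" by (simp add: power_mono)
    also have "\<dots> = cB^2 * (c - h R)" by (simp add: h_def power_mult_distrib)
    also have "\<dots> \<le> cB^2 * (\<bar>c\<bar> + \<bar>h R\<bar>)" by (intro mult_left_mono) auto
    finally show ?thesis .
  qed
  define Kq where "Kq = [:0, 0, 8*cA*cB + 24*cB^2, 24*cB^2*\<bar>c\<bar>:]"
  have main: "twice_diff_loc_lip_hess (\<lambda>R. P2 (h R) L) \<and> curvature_bounded (poly Kq L) (\<lambda>R. P2 (h R) L)"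
    if L: "L > 0" for L
  proof -
    define g where "g R = (-2 * P2d L (h R)) *\<^sub>R M R" for R
    define H where "H R = (-2 * P2d L (h R)) *\<^sub>R Blinfun M
        + (4 * P2dd L (h R)) *\<^sub>R (blinfun_scaleR_left (M R) o\<^sub>L blinfun_inner_left (M R))" for R
    have HM: "blinfun_apply (Blinfun M) = M" using blM by (rule bounded_linear_Blinfun_apply)
    have Happ: "blinfun_apply (H R) v = (-2 * P2d L (h R)) *\<^sub>R M v + (4 * P2dd L (h R) * (v \<bullet> M R)) *\<^sub>R M R" for R v
      unfolding H_def blinfun.add_left blinfun.scaleR_left HM by simp
    have dF: "((\<lambda>R. P2 (h R) L) has_derivative (\<lambda>v. g R \<bullet> v)) (at R)" for R
    proof -
      have "((\<lambda>R. P2 (h R) L) has_derivative (\<lambda>v. (-2 *\<^sub>R M R) \<bullet> v * P2d L (h R))) (at R)"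
        by (rule DERIV_compose_FDERIV[OF P2_deriv[OF L] dh])
      moreover have "(\<lambda>v. (-2 *\<^sub>R M R) \<bullet> v * P2d L (h R)) = (\<lambda>v. g R \<bullet> v)"
        by (auto simp: g_def)
      ultimately show ?thesis by simp
    qed
    have dg: "(g has_derivative blinfun_apply (H R)) (at R)" for R
    proof -
      have ds: "((\<lambda>R. -2 * P2d L (h R)) has_derivative (\<lambda>v. -2 * ((-2 *\<^sub>R M R) \<bullet> v * P2dd L (h R)))) (at R)"
        by (intro derivative_intros DERIV_compose_FDERIV[OF P2d_deriv[OF L] dh])
      have "(g has_derivative (\<lambda>v. (-2 * P2d L (h R)) *\<^sub>R M v + (-2 * ((-2 *\<^sub>R M R) \<bullet> v * P2dd L (h R))) *\<^sub>R M R)) (at R)"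
        unfolding g_def[abs_def] by (rule has_derivative_scaleR[OF ds dM])
      moreover have "(\<lambda>v. (-2 * P2d L (h R)) *\<^sub>R M v + (-2 * ((-2 *\<^sub>R M R) \<bullet> v * P2dd L (h R))) *\<^sub>R M R) = blinfun_apply (H R)"
        by (auto simp: Happ inner_commute algebra_simps)
      ultimately show ?thesis by simp
    qed
    have lh: "loclip h"
    proof -
      have e: "h = (\<lambda>R. c + A R \<bullet> (- A R))" unfolding h_def by (simp add: power2_norm_eq_inner)
      have "loclip (\<lambda>R. A R \<bullet> (- A R))"
        by (rule loclip_bilinear[OF bounded_bilinear_inner loclip_linear[OF blA]])
           (rule loclip_linear, intro bounded_linear_minus blA)
      then show ?thesis unfolding e by (intro loclip_add loclip_const)
    qed
    have lH: "loclip H"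
    proof -
      have l1: "loclip (\<lambda>R. (-2 * P2d L (h R)) *\<^sub>R Blinfun M)"
      proof (rule loclip_bilinear[OF bounded_bilinear_scaleR _ loclip_const])
        show "loclip (\<lambda>R. -2 * P2d L (h R))"
          by (rule loclip_compose[OF loclip_linear loclip_compose[OF lip_imp_loclip[OF P2d_lip[OF L]] lh]])
             (rule bounded_linear_mult_right)
      qed
      have l2: "loclip (\<lambda>R. (4 * P2dd L (h R)) *\<^sub>R (blinfun_scaleR_left (M R) o\<^sub>L blinfun_inner_left (M R)))"
      proof (rule loclip_bilinear[OF bounded_bilinear_scaleR])
        show "loclip (\<lambda>R. 4 * P2dd L (h R))"
          by (rule loclip_compose[OF loclip_linear loclip_compose[OF P2dd_loclip[OF L] lh]])
             (rule bounded_linear_mult_right)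
        show "loclip (\<lambda>R. blinfun_scaleR_left (M R) o\<^sub>L blinfun_inner_left (M R))"
          by (rule loclip_bilinear[OF bounded_bilinear_blinfun_compose]
              loclip_compose[OF loclip_linear loclip_linear[OF blM]]
              bounded_linear_blinfun_scaleR_left bounded_linear_blinfun_inner_left)+
      qed
      show ?thesis using loclip_add[OF l1 l2] unfolding H_def[abs_def] .
    qed
    have Kq: "poly Kq L = (8*cA*cB + 24*cB^2) * L^2 + 24*cB^2*\<bar>c\<bar> * L^3"
      by (simp add: Kq_def algebra_simps power2_eq_square power3_eq_cube)
    have Hb: "norm (H R) \<le> poly Kq L" for R
    proof (rule norm_blinfun_bound)
      show "0 \<le> poly Kq L" unfolding Kq using cA cB L by simp
      fix v
      have a1: "norm ((-2 * P2d L (h R)) *\<^sub>R M v) \<le> (8*L^2 * (cA*cB)) * norm v"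
      proof -
        have "norm ((-2 * P2d L (h R)) *\<^sub>R M v) = 2 * \<bar>P2d L (h R)\<bar> * norm (M v)" by (simp add: abs_mult)
        also have "\<dots> \<le> 2 * (4*L^2) * (norm v * cA * cB)"
        proof (intro mult_mono)
          show "norm (M v) \<le> norm v * cA * cB"
          proof -
            have "norm (M v) \<le> norm (A v) * cB" unfolding M_def by (rule cB(2))
            also have "\<dots> \<le> norm v * cA * cB" using cA(2)[of v] cB(1) by (intro mult_right_mono) auto
            finally show ?thesis .
          qed
        qed (use P2d_bound[OF L] in auto)
        finally show ?thesis by (simp add: algebra_simps)
      qed
      have a2: "norm ((4 * P2dd L (h R) * (v \<bullet> M R)) *\<^sub>R M R) \<le> (4 * cB^2 * (6*L^3*\<bar>c\<bar> + 6*L^2)) * norm v"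
      proof -
        have "norm ((4 * P2dd L (h R) * (v \<bullet> M R)) *\<^sub>R M R) = 4 * \<bar>P2dd L (h R)\<bar> * \<bar>v \<bullet> M R\<bar> * norm (M R)"
          by (simp add: abs_mult)
        also have "\<dots> \<le> 4 * \<bar>P2dd L (h R)\<bar> * (norm v * norm (M R)) * norm (M R)"
          by (intro mult_right_mono mult_left_mono Cauchy_Schwarz_ineq2) auto
        also have "\<dots> = 4 * norm v * (\<bar>P2dd L (h R)\<bar> * norm (M R)^2)" by (simp add: power2_eq_square algebra_simps)
        also have "\<dots> \<le> 4 * norm v * (\<bar>P2dd L (h R)\<bar> * (cB^2 * (\<bar>c\<bar> + \<bar>h R\<bar>)))"
          by (intro mult_left_mono hle) auto
        also have "\<dots> = 4 * norm v * cB^2 * (\<bar>P2dd L (h R)\<bar> * \<bar>c\<bar> + \<bar>h R\<bar> * \<bar>P2dd L (h R)\<bar>)"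
          by (simp add: algebra_simps)
        also have "\<dots> \<le> 4 * norm v * cB^2 * (6*L^3*\<bar>c\<bar> + 6*L^2)"
          by (intro mult_left_mono add_mono P2dd_xbound[OF L] mult_right_mono P2dd_bound[OF L]) auto
        finally show ?thesis by (simp add: algebra_simps)
      qed
      have "norm (blinfun_apply (H R) v) \<le> norm ((-2 * P2d L (h R)) *\<^sub>R M v) + norm ((4 * P2dd L (h R) * (v \<bullet> M R)) *\<^sub>R M R)"
        unfolding Happ by (rule norm_triangle_ineq)
      also have "\<dots> \<le> (8*L^2 * (cA*cB)) * norm v + (4 * cB^2 * (6*L^3*\<bar>c\<bar> + 6*L^2)) * norm v"
        using a1 a2 by (rule add_mono)
      also have "\<dots> = poly Kq L * norm v" unfolding Kq by (simp add: algebra_simps power2_eq_square power3_eq_cube)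
      finally show "norm (blinfun_apply (H R) v) \<le> poly Kq L * norm v" .
    qed
    have Kq0: "0 \<le> poly Kq L" unfolding Kq using cA cB L by simp
    have lipg: "(poly Kq L)-lipschitz_on UNIV g"
    proof (rule bounded_derivative_imp_lipschitz[where f'="\<lambda>x. blinfun_apply (H x)"])
      fix x
      show "(g has_derivative blinfun_apply (H x)) (at x within UNIV)" using dg by simp
      show "onorm (blinfun_apply (H x)) \<le> poly Kq L" using Hb[of x] by (simp add: norm_blinfun.rep_eq)
    qed (use Kq0 in auto)
    have lipg': "dist (g x) (g y) \<le> poly Kq L * dist x y" for x y
      using lipschitz_onD[OF lipg] by simp
    show ?thesis
    proof
      show "twice_diff_loc_lip_hess (\<lambda>R. P2 (h R) L)"
        unfolding twice_diff_loc_lip_hess_def using dF dg lH unfolding loclip_def by blast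
      show "curvature_bounded (poly Kq L) (\<lambda>R. P2 (h R) L)"
        unfolding curvature_bounded_def
        using convex_from_lipgrad[of "\<lambda>R. P2 (h R) L" g, OF dF lipg'] dF lipg' by blast
    qed
  qed
  show ?thesis unfolding h_def[symmetric] using main by blast
qed



theorem corollary3:
  fixes Ta Tb :: "real^3" and Tbar :: real
  shows "(\<forall>L2>0. twice_diff_loc_lip_hess (hbar Ta Tb Tbar L2))
       \<and> (\<exists>q :: real poly. \<forall>L2>0. curvature_bounded (poly q L2) (hbar Ta Tb Tbar L2))
       \<and> (\<forall>L2>0. (\<exists>g. mono g \<and> (\<forall>x. P2 x L2 = g (max (1 / L2 - x) 0)))
                 \<and> (\<forall>x. 0 \<le> P2 x L2) \<and> (\<exists>x. P2 x L2 = 0)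
                 \<and> P2 0 L2 = L2)"
proof -
  define A where "A R = fst R *v Ta - snd R *v Tb" for R :: "(real^3^3) \<times> (real^3^3)"
  have lin: "linear A"
    by (rule linearI)
       (simp_all add: A_def matrix_vector_mult_add_rdistrib scaleR_matrix_vector_assoc algebra_simps)
  have eq: "hbar Ta Tb Tbar L = (\<lambda>R. P2 (Tbar^2 - (norm (A R))^2) L)" for L
    by (simp add: hbar_def hfun_def A_def fun_eq_iff)
  have p12: "(\<forall>L2>0. twice_diff_loc_lip_hess (hbar Ta Tb Tbar L2))
       \<and> (\<exists>q :: real poly. \<forall>L2>0. curvature_bounded (poly q L2) (hbar Ta Tb Tbar L2))"
    unfolding eq using main_generic[OF lin, of "Tbar^2"] .
  have p3: "(\<exists>g. mono g \<and> (\<forall>x. P2 x L = g (max (1 / L - x) 0)))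
                 \<and> (\<forall>x. 0 \<le> P2 x L) \<and> (\<exists>x. P2 x L = 0) \<and> P2 0 L = L" if L: "L > 0" for L
  proof (intro conjI allI)
    define g where "g t = P2 (1/L - max t 0) L" for t
    have "mono g"
    proof (rule monoI)
      fix a b :: real assume "a \<le> b"
      then have "1/L - max b 0 \<le> 1/L - max a 0" by linarith
      then show "g a \<le> g b" unfolding g_def by (rule P2_antimono[OF L])
    qed
    moreover have "P2 x L = g (max (1 / L - x) 0)" for x
    proof (cases "x > 1/L")
      case True
      then have "max (1 / L - x) 0 = 0" by simp
      then show ?thesis using True L by (simp add: g_def P2_right P2_mid)
    next
      case False
      then have "max (1 / L - x) 0 = 1/L - x" by simp
      then show ?thesis using False by (simp add: g_def)
    qed
    ultimately show "\<exists>g. mono g \<and> (\<forall>x. P2 x L = g (max (1 / L - x) 0))" by blast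
    show "0 \<le> P2 x L" for x using P2_nonneg[OF L] .
    show "\<exists>x. P2 x L = 0"
      by (rule exI[of _ "2/L"]) (rule P2_right, use L in \<open>simp add: field_simps\<close>)
    show "P2 0 L = L" using P2_at0[OF L] .
  qed
  show ?thesis using p12 p3 by blast
qed

end
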